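(* Let $X$ be a linearly ordered set and let $\mathrm{BiComDer}\langle X,d\rangle$ be the free $\mathrm{BiCom}$-algebra with one derivation $d$ generated by $X$ (identified with $\mathrm{BiCom}\langle d^\omega X\rangle$, $d^\omega X=\{d^s(x)\mid s\ge0,x\in X\}$). Let $\mathrm{SGD}^!\langle X\rangle$ be the subalgebra of $\mathrm{BiComDer}\langle X,d\rangle$ generated by $X$ with respect to the operations $*$ and $u\star v=d(u)\odot v$. Then an element $f\in\mathrm{BiComDer}\langle X,d\rangle$ belongs to $\mathrm{SGD}^!\langle X\rangle$ if and only if, when $f$ is written in the basis of monomials of $\mathrm{BiCom}\langle d^\omega X\rangle$, all monomials occurring in $f$ have weight $-1$.
   Context: A $\mathrm{BiCom}$-algebra is a vector space with two bilinear operations $*$ and $\odot$, each associative and commutative, satisfying $(x\odot y)*z=x\odot(y*z)$; a derivation of it is a linear map that is a derivation for both operations. The weight of monomials in $\mathrm{BiComDer}\langle X,d\rangle$ is defined inductively by $\mathrm{wt}(x)=-1$ for $x\in X$, $\mathrm{wt}(d(u))=\mathrm{wt}(u)+1$, $\mathrm{wt}(u*v)=\mathrm{wt}(u)+\mathrm{wt}(v)+1$, $\mathrm{wt}(u\odot v)=\mathrm{wt}(u)+\mathrm{wt}(v)$ (this is well defined on the basis monomials $x_1*\dots*x_t*(y_1\odot\dots\odot y_k)$, $x_i,y_j\in d^\omega X$). *)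

theory Defs
  imports Main "HOL-Library.Multiset"
begin

text \<open>
  Concrete model of the free BiCom-algebra with one derivation, BiComDer<X,d>,
  identified (as in the paper) with BiCom<d^omega X>.

  A letter d^s(x) of d^omega X is encoded as the pair (s, x).

  A basis monomial x_1 * ... * x_t * (y_1 odot ... odot y_k) (k >= 1) of
  BiCom<d^omega X> is encoded by the pair (M, t) where M is the multiset
  {x_1,...,x_t,y_1,...,y_k} of all its letters and t is the number of
  star-products.  By the identities of BiCom (commutativity, associativity,
  (a odot b) * c = a odot (b * c), hence (a odot b) * c = (a odot c) * b)
  a monomial is determined exactly by these data, and distinct valid pairs
  give linearly independent elements; valid pairs are those with M nonempty
  and t < size M.
\<close>

type_synonym 'x letter = "nat \<times> 'x"
type_synonym 'x bmon = "'x letter multiset \<times> nat"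

definition valid_mon :: "'x bmon \<Rightarrow> bool" where
  "valid_mon m \<longleftrightarrow> fst m \<noteq> {#} \<and> snd m < size (fst m)"

definition star_mon :: "'x bmon \<Rightarrow> 'x bmon \<Rightarrow> 'x bmon" where
  "star_mon m n = (fst m + fst n, snd m + snd n + 1)"

definition odot_mon :: "'x bmon \<Rightarrow> 'x bmon \<Rightarrow> 'x bmon" where
  "odot_mon m n = (fst m + fst n, snd m + snd n)"

text \<open>Weight: wt(d^s x) = s - 1, wt(u*v) = wt u + wt v + 1, wt(u odot v) = wt u + wt v.\<close>
definition mon_weight :: "'x bmon \<Rightarrow> int" where
  "mon_weight m = (\<Sum>a\<in>#fst m. int (fst a) - 1) + int (snd m)"

definition supp :: "('m \<Rightarrow> 'k::zero) \<Rightarrow> 'm set" where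
  "supp f = {m. f m \<noteq> 0}"

definition BiComDer :: "('x bmon \<Rightarrow> 'k::zero) set" where
  "BiComDer = {f. finite (supp f) \<and> (\<forall>m\<in>supp f. valid_mon m)}"

definition bstar :: "('x bmon \<Rightarrow> 'k::comm_ring_1) \<Rightarrow> ('x bmon \<Rightarrow> 'k) \<Rightarrow> ('x bmon \<Rightarrow> 'k)" where
  "bstar f g = (\<lambda>p. \<Sum>m\<in>supp f. \<Sum>n\<in>supp g. if star_mon m n = p then f m * g n else 0)"

definition bodot :: "('x bmon \<Rightarrow> 'k::comm_ring_1) \<Rightarrow> ('x bmon \<Rightarrow> 'k) \<Rightarrow> ('x bmon \<Rightarrow> 'k)" where
  "bodot f g = (\<lambda>p. \<Sum>m\<in>supp f. \<Sum>n\<in>supp g. if odot_mon m n = p then f m * g n else 0)"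

text \<open>The derivation d: d(d^s x) = d^(s+1) x, extended to monomials by the
  Leibniz rule for both products (so d(M,t) = sum over occurrences of letters a
  in M of (M - {a} + {d a}, t)), and linearly.\<close>
definition dletter :: "'x letter \<Rightarrow> 'x letter" where
  "dletter a = (Suc (fst a), snd a)"

definition bder :: "('x bmon \<Rightarrow> 'k::comm_ring_1) \<Rightarrow> ('x bmon \<Rightarrow> 'k)" where
  "bder f = (\<lambda>p. \<Sum>m\<in>supp f. \<Sum>a\<in>set_mset (fst m).
      if (fst m - {#a#} + {#dletter a#}, snd m) = p then f m * of_nat (count (fst m) a) else 0)"

definition bgen :: "'x \<Rightarrow> ('x bmon \<Rightarrow> 'k::comm_ring_1)" where
  "bgen x = (\<lambda>p. if p = ({#(0, x)#}, 0) then 1 else 0)"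

inductive_set SGD_shriek :: "('x bmon \<Rightarrow> 'k::comm_ring_1) set" where
  gen: "bgen x \<in> SGD_shriek"
| zero: "(\<lambda>_. 0) \<in> SGD_shriek"
| add: "u \<in> SGD_shriek \<Longrightarrow> v \<in> SGD_shriek \<Longrightarrow> (\<lambda>p. u p + v p) \<in> SGD_shriek"
| smult: "u \<in> SGD_shriek \<Longrightarrow> (\<lambda>p. c * u p) \<in> SGD_shriek"
| star: "u \<in> SGD_shriek \<Longrightarrow> v \<in> SGD_shriek \<Longrightarrow> bstar u v \<in> SGD_shriek"
| dstar: "u \<in> SGD_shriek \<Longrightarrow> v \<in> SGD_shriek \<Longrightarrow> bodot (bder u) v \<in> SGD_shriek"

end

theory Submission
  imports Defs
begin

definition ind :: "'x bmon \<Rightarrow> ('x bmon \<Rightarrow> 'k::comm_ring_1)" where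
  "ind m = (\<lambda>p. if p = m then 1 else 0)"

definition wsum :: "'x letter multiset \<Rightarrow> int" where
  "wsum M = (\<Sum>a\<in>#M. int (fst a) - 1)"

definition Qs :: "'x letter multiset \<Rightarrow> nat" where
  "Qs M = (\<Sum>a\<in>#M. fst a ^ 2)"

lemma mon_weight_eq: "mon_weight m = wsum (fst m) + int (snd m)"
  by (simp add: mon_weight_def wsum_def)

lemma wsum_simps[simp]: "wsum {#} = 0" "wsum (add_mset a A) = int (fst a) - 1 + wsum A"
  "wsum (A + B) = wsum A + wsum B"
  by (simp_all add: wsum_def)

lemma Qs_simps[simp]: "Qs {#} = 0" "Qs (add_mset a A) = fst a ^ 2 + Qs A"
  "Qs (A + B) = Qs A + Qs B"
  by (simp_all add: Qs_def)

lemma wsum_zero: "(\<forall>a\<in>#M. fst a = 0) \<Longrightarrow> wsum M = - int (size M)"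
  by (induction M) auto

lemma wsum_pos: "(\<forall>a\<in>#M. fst a \<ge> 1) \<Longrightarrow> wsum M \<ge> 0"
  by (induction M) auto

lemma wsum_remove: "a \<in># M \<Longrightarrow> wsum M = int (fst a) - 1 + wsum (M - {#a#})"
  by (metis insert_DiffM wsum_simps(2))

lemma supp_ind[simp]: "supp (ind m :: 'x bmon \<Rightarrow> 'k::comm_ring_1) = {m}"
  by (auto simp: supp_def ind_def)

lemma bstar_ind: "bstar (ind m) (ind n) = (ind (star_mon m n) :: _ \<Rightarrow> 'k::comm_ring_1)"
  unfolding bstar_def supp_ind by (simp add: ind_def fun_eq_iff)

lemma ind_self[simp]: "ind m m = 1"
  by (simp add: ind_def)

lemma bgen_ind: "bgen x = ind ({#(0,x)#},0)"
  by (simp add: bgen_def ind_def fun_eq_iff)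

lemma supp_add: "supp (\<lambda>p. u p + (v p :: 'k::comm_ring_1)) \<subseteq> supp u \<union> supp v"
  by (auto simp: supp_def)

lemma supp_smult: "supp (\<lambda>p. c * (u p :: 'k::comm_ring_1)) \<subseteq> supp u"
  by (auto simp: supp_def)

lemma supp_bstar: "supp (bstar u v) \<subseteq> (\<lambda>(m,n). star_mon m n) ` (supp u \<times> supp v)"
proof
  fix p assume "p \<in> supp (bstar u v)"
  then have "bstar u v p \<noteq> 0" by (simp add: supp_def)
  moreover have "\<exists>m\<in>supp u. \<exists>n\<in>supp v. star_mon m n = p"
  proof (rule ccontr)
    assume "\<not> ?thesis"
    then have "bstar u v p = 0" unfolding bstar_def by (auto intro!: sum.neutral)
    then show False using \<open>bstar u v p \<noteq> 0\<close> by simp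
  qed
  ultimately obtain m n where "m \<in> supp u" "n \<in> supp v" "star_mon m n = p" by blast
  then show "p \<in> (\<lambda>(m,n). star_mon m n) ` (supp u \<times> supp v)" by force
qed

lemma supp_bodot: "supp (bodot u v) \<subseteq> (\<lambda>(m,n). odot_mon m n) ` (supp u \<times> supp v)"
proof
  fix p assume "p \<in> supp (bodot u v)"
  then have "bodot u v p \<noteq> 0" by (simp add: supp_def)
  moreover have "\<exists>m\<in>supp u. \<exists>n\<in>supp v. odot_mon m n = p"
  proof (rule ccontr)
    assume "\<not> ?thesis"
    then have "bodot u v p = 0" unfolding bodot_def by (auto intro!: sum.neutral)
    then show False using \<open>bodot u v p \<noteq> 0\<close> by simp
  qed
  ultimately obtain m n where "m \<in> supp u" "n \<in> supp v" "odot_mon m n = p" by blast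
  then show "p \<in> (\<lambda>(m,n). odot_mon m n) ` (supp u \<times> supp v)" by force
qed

lemma supp_bder: "supp (bder u) \<subseteq>
   (\<lambda>(m,a). (fst m - {#a#} + {#dletter a#}, snd m)) ` (SIGMA m:supp u. set_mset (fst m))"
proof
  fix p assume "p \<in> supp (bder u)"
  then have "bder u p \<noteq> 0" by (simp add: supp_def)
  moreover have "\<exists>m\<in>supp u. \<exists>a\<in>#fst m. (fst m - {#a#} + {#dletter a#}, snd m) = p"
  proof (rule ccontr)
    assume "\<not> ?thesis"
    then have "bder u p = 0" unfolding bder_def by (auto intro!: sum.neutral)
    then show False using \<open>bder u p \<noteq> 0\<close> by simp
  qed
  ultimately obtain m a where "m \<in> supp u" "a \<in># fst m" "(fst m - {#a#} + {#dletter a#}, snd m) = p" by blast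
  then show "p \<in> (\<lambda>(m,a). (fst m - {#a#} + {#dletter a#}, snd m)) ` (SIGMA m:supp u. set_mset (fst m))"
    by force
qed

lemma wt_star: "mon_weight (star_mon m n) = mon_weight m + mon_weight n + 1"
  by (simp add: mon_weight_eq star_mon_def)

lemma wt_odot: "mon_weight (odot_mon m n) = mon_weight m + mon_weight n"
  by (simp add: mon_weight_eq odot_mon_def)

lemma wt_der: "a \<in># fst m \<Longrightarrow> mon_weight (fst m - {#a#} + {#dletter a#}, snd m) = mon_weight m + 1"
  using wsum_remove[of a "fst m"] by (simp add: mon_weight_eq dletter_def)

lemma fwd:
  assumes "u \<in> SGD_shriek"
  shows "finite (supp u) \<and> (\<forall>m\<in>supp u. mon_weight m = -1)"
  using assms
proof (induction rule: SGD_shriek.induct)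
  case (gen x)
  then show ?case by (simp add: bgen_ind mon_weight_eq)
next
  case zero
  then show ?case by (simp add: supp_def)
next
  case (add u v)
  have "finite (supp (\<lambda>p. u p + v p))"
    by (rule finite_subset[OF supp_add]) (use add.IH in blast)
  moreover have "\<forall>m\<in>supp (\<lambda>p. u p + v p). mon_weight m = -1"
    using supp_add[of u v] add.IH by blast
  ultimately show ?case by blast
next
  case (smult u c)
  have "finite (supp (\<lambda>p. c * u p))"
    by (rule finite_subset[OF supp_smult]) (use smult.IH in blast)
  moreover have "\<forall>m\<in>supp (\<lambda>p. c * u p). mon_weight m = -1"
    using supp_smult[of c u] smult.IH by blast
  ultimately show ?case by blast
next
  case (star u v)
  have f: "finite (supp (bstar u v))"
    using star.IH by (intro finite_subset[OF supp_bstar] finite_imageI finite_cartesian_product) auto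
  have "\<forall>m\<in>supp (bstar u v). mon_weight m = -1"
  proof
    fix p assume "p \<in> supp (bstar u v)"
    then have "p \<in> (\<lambda>(m,n). star_mon m n) ` (supp u \<times> supp v)"
      by (rule subsetD[OF supp_bstar])
    then obtain m n where "m \<in> supp u" "n \<in> supp v" "p = star_mon m n"
      by auto
    moreover have "mon_weight m = -1" "mon_weight n = -1"
      using star.IH \<open>m \<in> supp u\<close> \<open>n \<in> supp v\<close> by blast+
    ultimately show "mon_weight p = -1" by (simp add: wt_star)
  qed
  then show ?case using f by blast
next
  case (dstar u v)
  have fd: "finite (supp (bder u))"
    using dstar.IH by (intro finite_subset[OF supp_bder] finite_imageI finite_SigmaI) auto
  have wd: "\<forall>m\<in>supp (bder u). mon_weight m = 0"
  proof
    fix p assume "p \<in> supp (bder u)"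
    then have "p \<in> (\<lambda>(m,a). (fst m - {#a#} + {#dletter a#}, snd m)) ` (SIGMA m:supp u. set_mset (fst m))"
      by (rule subsetD[OF supp_bder])
    then obtain m a where "m \<in> supp u" "a \<in># fst m" "p = (fst m - {#a#} + {#dletter a#}, snd m)"
      by auto
    moreover have "mon_weight m = -1"
      using dstar.IH \<open>m \<in> supp u\<close> by blast
    ultimately show "mon_weight p = 0" using wt_der[of a m] by (simp del: add_mset_add_single)
  qed
  have f: "finite (supp (bodot (bder u) v))"
    using dstar.IH fd by (intro finite_subset[OF supp_bodot] finite_imageI finite_cartesian_product) auto
  have "\<forall>m\<in>supp (bodot (bder u) v). mon_weight m = -1"
  proof
    fix p assume "p \<in> supp (bodot (bder u) v)"
    then have "p \<in> (\<lambda>(m,n). odot_mon m n) ` (supp (bder u) \<times> supp v)"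
      by (rule subsetD[OF supp_bodot])
    then obtain m n where "m \<in> supp (bder u)" "n \<in> supp v" "p = odot_mon m n"
      by auto
    moreover have "mon_weight m = 0" "mon_weight n = -1"
      using dstar.IH wd \<open>m \<in> supp (bder u)\<close> \<open>n \<in> supp v\<close> by blast+
    ultimately show "mon_weight p = -1" by (simp add: wt_odot)
  qed
  then show ?case using f by blast
qed


lemma bder_ind: "bder (ind w :: 'x bmon \<Rightarrow> 'k::comm_ring_1) = (\<lambda>p. \<Sum>a\<in>set_mset (fst w).
   of_nat (count (fst w) a) * ind (fst w - {#a#} + {#dletter a#}, snd w) p)"
  unfolding bder_def supp_ind by (auto simp: ind_def fun_eq_iff intro!: sum.cong)

lemma bodot_superset:
  fixes f g :: "'x bmon \<Rightarrow> 'k::comm_ring_1"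
  assumes "finite S" "supp f \<subseteq> S" "finite T" "supp g \<subseteq> T"
  shows "bodot f g p = (\<Sum>m\<in>S. \<Sum>n\<in>T. if odot_mon m n = p then f m * g n else 0)"
proof -
  have "bodot f g p = (\<Sum>m\<in>supp f. \<Sum>n\<in>T. if odot_mon m n = p then f m * g n else 0)"
    unfolding bodot_def
  proof (rule sum.cong[OF refl], rule sum.mono_neutral_left)
    fix m
    show "finite T" using assms by simp
    show "supp g \<subseteq> T" using assms by simp
    show "\<forall>i\<in>T - supp g. (if odot_mon m i = p then f m * g i else 0) = 0"
      by (auto simp: supp_def)
  qed
  also have "\<dots> = (\<Sum>m\<in>S. \<Sum>n\<in>T. if odot_mon m n = p then f m * g n else 0)"
  proof (rule sum.mono_neutral_left)
    show "\<forall>i\<in>S - supp f. (\<Sum>n\<in>T. if odot_mon i n = p then f i * g n else 0) = 0"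
    proof
      fix i assume "i \<in> S - supp f"
      then have "f i = 0" by (simp add: supp_def)
      then show "(\<Sum>n\<in>T. if odot_mon i n = p then f i * g n else 0) = 0" by (intro sum.neutral) simp
    qed
  qed (use assms in auto)
  finally show ?thesis .
qed

lemma bodot_bder_ind:
  "bodot (bder (ind w)) (ind v) = (\<lambda>p. \<Sum>a\<in>set_mset (fst w).
     of_nat (count (fst w) a) * ind (odot_mon (fst w - {#a#} + {#dletter a#}, snd w) v) p
     :: 'k::comm_ring_1)"
proof
  fix p
  define img where "img a = (fst w - {#a#} + {#dletter a#}, snd w)" for a
  define c where "c a = (of_nat (count (fst w) a) :: 'k)" for a
  define S where "S = img ` set_mset (fst w)"
  have bd: "bder (ind w) = (\<lambda>m. \<Sum>a\<in>set_mset (fst w). c a * ind (img a) m)"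
    unfolding bder_ind img_def c_def ..
  have sS: "supp (bder (ind w) :: _ \<Rightarrow> 'k) \<subseteq> S"
  proof
    fix m assume "m \<in> supp (bder (ind w) :: _ \<Rightarrow> 'k)"
    then have "(\<Sum>a\<in>set_mset (fst w). c a * (ind (img a) m :: 'k)) \<noteq> 0" by (simp add: supp_def bd)
    then obtain a where "a \<in># fst w" "c a * (ind (img a) m :: 'k) \<noteq> 0"
      by (meson sum.neutral)
    then show "m \<in> S" unfolding S_def by (auto simp: ind_def split: if_splits)
  qed
  have "bodot (bder (ind w)) (ind v) p = (\<Sum>m\<in>S. \<Sum>n\<in>{v}. if odot_mon m n = p then bder (ind w) m * (ind v n :: 'k) else 0)"
    by (rule bodot_superset) (use sS in \<open>auto simp: S_def\<close>)
  also have "\<dots> = (\<Sum>m\<in>S. \<Sum>a\<in>set_mset (fst w). if odot_mon m v = p then c a * ind (img a) m else 0)"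
    by (intro sum.cong refl, cases "odot_mon m v = p") (simp_all add: bd ind_self)
  also have "\<dots> = (\<Sum>a\<in>set_mset (fst w). \<Sum>m\<in>S. if m = img a then (if odot_mon m v = p then c a else 0) else 0)"
    by (subst sum.swap) (auto simp: ind_def intro!: sum.cong)
  also have "\<dots> = (\<Sum>a\<in>set_mset (fst w). if odot_mon (img a) v = p then c a else 0)"
    by (rule sum.cong[OF refl]) (auto simp: S_def)
  also have "\<dots> = (\<Sum>a\<in>set_mset (fst w). c a * ind (odot_mon (img a) v) p)"
    by (auto simp: ind_def intro!: sum.cong)
  finally show "bodot (bder (ind w)) (ind v) p = (\<Sum>a\<in>set_mset (fst w).
     of_nat (count (fst w) a) * ind (odot_mon (fst w - {#a#} + {#dletter a#}, snd w) v) p :: 'k)"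
    by (simp add: c_def img_def)
qed

lemma sgd_sum:
  fixes g :: "'i \<Rightarrow> 'x bmon \<Rightarrow> 'k::comm_ring_1"
  assumes "finite I" "\<forall>i\<in>I. g i \<in> SGD_shriek"
  shows "(\<lambda>p. \<Sum>i\<in>I. c i * g i p) \<in> SGD_shriek"
  using assms
proof (induction I rule: finite_induct)
  case empty
  then show ?case by (simp add: SGD_shriek.zero)
next
  case (insert i I)
  then show ?case
    using SGD_shriek.add[OF SGD_shriek.smult[of "g i" "c i"], of "\<lambda>p. \<Sum>i\<in>I. c i * g i p"]
    by simp
qed

lemma exists_submset: "k \<le> size N \<Longrightarrow> \<exists>C. C \<subseteq># N \<and> size C = k"
proof (induction N arbitrary: k)
  case empty
  then show ?case by auto
next
  case (add x N)
  show ?case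
  proof (cases "k \<le> size N")
    case True
    then obtain C where "C \<subseteq># N" "size C = k" using add.IH by blast
    moreover have "N \<subseteq># add_mset x N" by (simp add: subset_mset.le_iff_add)
    ultimately show ?thesis by (metis subset_mset.dual_order.trans)
  next
    case False
    then have "k = size (add_mset x N)" using add.prems by simp
    then show ?thesis by blast
  qed
qed

lemma step:
  fixes M :: "'x letter multiset" and t :: nat
  assumes IH: "\<And>M' t'. size M' < size M \<or> (size M' = size M \<and> Qs M' < Qs M) \<Longrightarrow> M' \<noteq> {#} \<Longrightarrow>
      mon_weight (M',t') = -1 \<Longrightarrow> (ind (M',t') :: 'x bmon \<Rightarrow> 'k::comm_ring_1) \<in> SGD_shriek"
  and ne: "M \<noteq> {#}" and wt: "mon_weight (M,t) = -1"
  shows "(ind (M,t) :: 'x bmon \<Rightarrow> 'k) \<in> SGD_shriek"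
proof (cases "\<exists>a\<in>#M. fst a \<ge> 1")
  case False
  then have z: "\<forall>a\<in>#M. fst a = 0" by auto
  have ws: "wsum M = - int (size M)" using wsum_zero[OF z] .
  have tM: "int t = int (size M) - 1" using wt ws by (simp add: mon_weight_eq)
  obtain a where a: "a \<in># M" using ne by blast
  obtain x where ax: "a = (0, x)" using z a by (metis prod.collapse)
  show ?thesis
  proof (cases "size M = 1")
    case True
    then obtain b where "M = {#b#}" using size_1_singleton_mset by blast
    then have M1: "M = {#a#}" using a by simp
    moreover have "t = 0" using tM True by simp
    ultimately have "(ind (M,t) :: 'x bmon \<Rightarrow> 'k) = bgen x" by (simp add: ax bgen_ind)
    then show ?thesis using SGD_shriek.gen by metis
  next
    case False
    have "size M \<noteq> 0" using ne by simp
    then have sz: "size M \<ge> 2" using False by linarith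
    define M' where "M' = M - {#a#}"
    have MM: "M = add_mset a M'" using a by (simp add: M'_def)
    have t1: "t \<ge> 1" using tM sz by linarith
    have eq: "(M,t) = star_mon ({#a#},0) (M', t - 1)" using MM t1 by (simp add: star_mon_def)
    have "(ind (M', t-1) :: 'x bmon \<Rightarrow> 'k) \<in> SGD_shriek"
    proof (rule IH)
      show "size M' < size M \<or> (size M' = size M \<and> Qs M' < Qs M)" by (simp add: MM)
      show "M' \<noteq> {#}" using sz MM by auto
      have "wsum M = -1 + wsum M'" using MM ax by simp
      then show "mon_weight (M', t - 1) = -1" using ws tM t1 MM by (simp add: mon_weight_eq of_nat_diff)
    qed
    then have "bstar (bgen x) (ind (M', t-1)) \<in> (SGD_shriek :: ('x bmon \<Rightarrow> 'k) set)"
      by (rule SGD_shriek.star[OF SGD_shriek.gen])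
    moreover have "bstar (bgen x) (ind (M', t-1)) = (ind (M,t) :: 'x bmon \<Rightarrow> 'k)"
      by (simp add: eq bstar_ind bgen_ind ax)
    ultimately show ?thesis by simp
  qed
next
  case True
  then obtain a where a: "a \<in># M" "fst a \<ge> 1" by blast
  obtain s y where asy: "a = (s,y)" by (cases a)
  have s1: "s \<ge> 1" using a asy by simp
  define Z where "Z = filter_mset (\<lambda>b. fst b = 0) M"
  define P where "P = filter_mset (\<lambda>b. fst b \<noteq> 0) M"
  have MZP: "M = Z + P" unfolding Z_def P_def by (rule multiset_partition)
  have wZ: "wsum Z = - int (size Z)" by (rule wsum_zero) (simp add: Z_def)
  have aP: "a \<in># P" using a by (simp add: P_def)
  have "\<forall>b\<in>#P - {#a#}. fst b \<ge> 1" by (auto simp: P_def dest: in_diffD)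
  then have "wsum (P - {#a#}) \<ge> 0" by (rule wsum_pos)
  then have wP: "wsum P \<ge> int s - 1" using wsum_remove[OF aP] asy by simp
  have "wsum M \<le> -1" using wt by (simp add: mon_weight_eq)
  moreover have "wsum M = wsum Z + wsum P" using MZP by (metis wsum_simps(3))
  ultimately have zs: "size Z \<ge> s" using wZ wP by linarith
  have "Z = filter_mset (\<lambda>b. fst b = 0) (M - {#a#})" using s1 asy by (simp add: Z_def)
  then have Zsub: "Z \<subseteq># M - {#a#}" by (metis multiset_filter_subset)
  have "s - 1 \<le> size Z" using zs by linarith
  then obtain C where C: "C \<subseteq># Z" "size C = s - 1" using exists_submset[of "s-1" Z] by blast
  have Cz: "\<forall>b\<in>#C. fst b = 0" using C(1) by (auto simp: Z_def dest: mset_subset_eqD)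
  have CM: "C \<subseteq># M - {#a#}" using C(1) Zsub by (metis subset_mset.dual_order.trans)
  define V where "V = M - {#a#} - C"
  have MV: "M = add_mset a (C + V)"
  proof -
    have "C + V = M - {#a#}" unfolding V_def using CM by (rule subset_mset.add_diff_inverse)
    then show ?thesis using a by simp
  qed
  have "size Z \<le> size (M - {#a#})" using Zsub by (rule size_mset_mono)
  then have h: "size Z \<le> size M - 1" using a by (simp add: size_Diff_submset)
  have "size M \<noteq> 0" using ne by simp
  then have szZ: "size Z + 1 \<le> size M" using h by linarith
  have szM: "size M = 1 + size C + size V" using MV by simp
  have szV: "size V \<ge> 1" using szM szZ zs C(2) s1 by linarith
  then have Vne: "V \<noteq> {#}" by auto
  define e where "e = (s - 1, y)"
  define w where "w = (add_mset e C, 0::nat)"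
  have eC: "e \<notin># C"
  proof
    assume "e \<in># C"
    then have "fst e = 0" using Cz by blast
    then have "s = 1" using e_def s1 by simp
    then have "size C = 0" using C(2) by simp
    then show False using \<open>e \<in># C\<close> by simp
  qed
  have wC: "wsum C = - (int s - 1)" using wsum_zero[OF Cz] C(2) s1 by simp
  have wV: "wsum V = wsum M" using MV wC asy s1 by simp
  have w_in: "(ind w :: 'x bmon \<Rightarrow> 'k) \<in> SGD_shriek"
    unfolding w_def
  proof (rule IH)
    show "size (add_mset e C) < size M \<or> (size (add_mset e C) = size M \<and> Qs (add_mset e C) < Qs M)"
      using szM szV by simp
    show "add_mset e C \<noteq> {#}" by simp
    show "mon_weight (add_mset e C, 0) = -1" using wC s1 by (simp add: mon_weight_eq e_def of_nat_diff)
  qed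
  have v_in: "(ind (V,t) :: 'x bmon \<Rightarrow> 'k) \<in> SGD_shriek"
  proof (rule IH)
    show "size V < size M \<or> (size V = size M \<and> Qs V < Qs M)" using szM by simp
    show "V \<noteq> {#}" by (rule Vne)
    show "mon_weight (V, t) = -1" using wt wV by (simp add: mon_weight_eq)
  qed
  have X: "bodot (bder (ind w)) (ind (V,t)) \<in> (SGD_shriek :: ('x bmon \<Rightarrow> 'k) set)"
    by (rule SGD_shriek.dstar[OF w_in v_in])
  define N where "N b = add_mset e (C - {#b#}) + {#dletter b#} + V" for b
  have N_in: "\<forall>b\<in>set_mset C. (ind (N b, t) :: 'x bmon \<Rightarrow> 'k) \<in> SGD_shriek"
  proof
    fix b assume b: "b \<in> set_mset C"
    have b0: "fst b = 0" using Cz b by simp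
    have "C \<noteq> {#}" using b by auto
    then have "size C \<noteq> 0" by simp
    then have s2: "s \<ge> 2" using C(2) by linarith
    have CC: "C = add_mset b (C - {#b#})" using b by simp
    have QC: "Qs C = Qs (C - {#b#})" using b0 by (subst CC) simp
    have WC: "wsum C = -1 + wsum (C - {#b#})" using b0 by (subst CC) simp
    have szC: "size C = 1 + size (C - {#b#})" by (subst CC) simp
    show "(ind (N b, t) :: 'x bmon \<Rightarrow> 'k) \<in> SGD_shriek"
    proof (rule IH)
      obtain k where k0: "s = Suc k" using s2 by (cases s) auto
      have k: "s = Suc k" "k \<ge> 1" using k0 s2 by simp_all
      have "Qs (N b) = k^2 + Qs C + 1 + Qs V"
        using QC b0 k by (simp add: N_def e_def dletter_def)
      moreover have "Qs M = s^2 + Qs C + Qs V" using MV asy by simp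
      moreover have "k^2 + 1 < s^2" using k by (simp add: power2_eq_square)
      moreover have "size (N b) = size M" using szM szC by (simp add: N_def)
      ultimately show "size (N b) < size M \<or> (size (N b) = size M \<and> Qs (N b) < Qs M)" by simp
      show "N b \<noteq> {#}" by (simp add: N_def)
      have "wsum (N b) = wsum V" using WC wC s1 b0 by (simp add: N_def e_def dletter_def of_nat_diff)
      then show "mon_weight (N b, t) = -1" using wt wV by (simp add: mon_weight_eq)
    qed
  qed
  have S: "(\<lambda>p. \<Sum>b\<in>set_mset C. of_nat (count C b) * (ind (N b, t) :: 'x bmon \<Rightarrow> 'k) p) \<in> SGD_shriek"
    by (rule sgd_sum) (use N_in in auto)
  have eq: "bodot (bder (ind w)) (ind (V,t)) p = (ind (M,t) :: 'x bmon \<Rightarrow> 'k) p + (\<Sum>b\<in>set_mset C. of_nat (count C b) * (ind (N b, t) :: 'x bmon \<Rightarrow> 'k) p)" for p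
  proof -
    have "bodot (bder (ind w)) (ind (V,t)) p = (\<Sum>b\<in>insert e (set_mset C). of_nat (count (add_mset e C) b) *
       (ind (odot_mon (add_mset e C - {#b#} + {#dletter b#}, 0) (V,t)) :: 'x bmon \<Rightarrow> 'k) p)"
      by (simp add: bodot_bder_ind w_def)
    also have "\<dots> = of_nat (count (add_mset e C) e) *
       (ind (odot_mon (add_mset e C - {#e#} + {#dletter e#}, 0) (V,t)) :: 'x bmon \<Rightarrow> 'k) p
       + (\<Sum>b\<in>set_mset C. of_nat (count (add_mset e C) b) *
       (ind (odot_mon (add_mset e C - {#b#} + {#dletter b#}, 0) (V,t)) :: 'x bmon \<Rightarrow> 'k) p)"
      using eC by (simp add: sum.insert)
    also have "\<dots> = (ind (M,t) :: 'x bmon \<Rightarrow> 'k) p + (\<Sum>b\<in>set_mset C. of_nat (count C b) * (ind (N b, t) :: 'x bmon \<Rightarrow> 'k) p)"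
    proof -
      have "odot_mon (add_mset e C - {#e#} + {#dletter e#}, 0) (V,t) = (M,t)"
        using MV asy s1 by (simp add: odot_mon_def e_def dletter_def)
      moreover have "count (add_mset e C) e = 1" using eC by (simp add: count_eq_zero_iff)
      moreover have "of_nat (count (add_mset e C) b) *
       (ind (odot_mon (add_mset e C - {#b#} + {#dletter b#}, 0) (V,t)) :: 'x bmon \<Rightarrow> 'k) p =
        of_nat (count C b) * (ind (N b, t) :: 'x bmon \<Rightarrow> 'k) p" if "b \<in> set_mset C" for b
      proof -
        have "b \<noteq> e" using that eC by auto
        then show ?thesis using that by (simp add: odot_mon_def N_def)
      qed
      ultimately show ?thesis by (simp cong: sum.cong)
    qed
    finally show ?thesis .
  qed
  have "(\<lambda>p. bodot (bder (ind w)) (ind (V,t)) p + (-1) *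
     (\<Sum>b\<in>set_mset C. of_nat (count C b) * (ind (N b, t) :: 'x bmon \<Rightarrow> 'k) p)) \<in> SGD_shriek"
    using SGD_shriek.add[OF X SGD_shriek.smult[OF S, of "-1"]] by simp
  moreover have "(\<lambda>p. bodot (bder (ind w)) (ind (V,t)) p + (-1) *
     (\<Sum>b\<in>set_mset C. of_nat (count C b) * (ind (N b, t) :: 'x bmon \<Rightarrow> 'k) p)) = ind (M,t)"
    using eq by (simp add: fun_eq_iff)
  ultimately show ?thesis by simp
qed


lemma all_ind:
  "fst (T :: 'x bmon) \<noteq> {#} \<Longrightarrow> mon_weight T = -1 \<Longrightarrow> (ind T :: 'x bmon \<Rightarrow> 'k::comm_ring_1) \<in> SGD_shriek"
proof (induction T rule: wf_induct[OF wf_measures[of "[\<lambda>T. size (fst T), \<lambda>T. Qs (fst T)]"]])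
  case (1 T)
  obtain M t where T: "T = (M,t)" by (cases T)
  show ?case unfolding T
  proof (rule step)
    fix M' :: "'x letter multiset" and t' :: nat
    assume "size M' < size M \<or> (size M' = size M \<and> Qs M' < Qs M)" "M' \<noteq> {#}" "mon_weight (M',t') = -1"
    then show "(ind (M',t') :: 'x bmon \<Rightarrow> 'k) \<in> SGD_shriek"
      using "1.IH"[rule_format, of "(M',t')"] T by auto
  qed (use "1.prems" T in auto)
qed

theorem mainTheorem6:
  fixes f :: "('x::linorder) bmon \<Rightarrow> 'k::field_char_0"
  assumes "f \<in> BiComDer"
  shows "f \<in> SGD_shriek \<longleftrightarrow> (\<forall>m\<in>supp f. mon_weight m = -1)"
proof
  assume "f \<in> SGD_shriek"
  then show "\<forall>m\<in>supp f. mon_weight m = -1" using fwd by blast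
next
  assume W: "\<forall>m\<in>supp f. mon_weight m = -1"
  have fin: "finite (supp f)" and V: "\<forall>m\<in>supp f. valid_mon m"
    using assms by (auto simp: BiComDer_def)
  have "(\<lambda>p. \<Sum>m\<in>supp f. f m * ind m p) \<in> SGD_shriek"
  proof (rule sgd_sum[OF fin])
    show "\<forall>m\<in>supp f. (ind m :: 'x bmon \<Rightarrow> 'k) \<in> SGD_shriek"
      using W V by (auto simp: valid_mon_def intro!: all_ind)
  qed
  moreover have "(\<lambda>p. \<Sum>m\<in>supp f. f m * ind m p) = f"
  proof
    fix p
    have "(\<Sum>m\<in>supp f. f m * ind m p) = (\<Sum>m\<in>supp f. if m = p then f m else 0)"
      by (intro sum.cong) (auto simp: ind_def)
    also have "\<dots> = (if p \<in> supp f then f p else 0)"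
      using fin by (simp add: sum.delta)
    also have "\<dots> = f p" by (auto simp: supp_def)
    finally show "(\<Sum>m\<in>supp f. f m * ind m p) = f p" .
  qed
  ultimately show "f \<in> SGD_shriek" by simp
qed

end
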